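(* For $n\ge 2$, the path $P_n$ with $n$ vertices satisfies $\nu^*(P_n)=2n^2-2n-1$.
   Context: For a finite simple graph $G=(V,E)$ with $\ell=|V|+|E|$, a construction sequence (c-sequence) is a bijection $x:\{1,\dots,\ell\}\to V\sqcup E$ such that every edge $e=uw$ satisfies $x^{-1}(e)>\max\{x^{-1}(u),x^{-1}(w)\}$. The cost of $x$ is $\nu(x)=\sum_{e=uw\in E}\big(2x^{-1}(e)-x^{-1}(u)-x^{-1}(w)\big)$, and $\nu^*(G)$ is the maximum of $\nu(x)$ over all c-sequences for $G$. $P_n$ is the path with vertex set $\{1,\dots,n\}$ and edges $\{j,j+1\}$, $1\le j\le n-1$. *)

theory Defs
  imports Main
begin

text \<open>A finite simple graph is given by a vertex set V and a set E of 2-element subsets of V.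
  Elements of the disjoint union V \<sqcup> E are represented in the sum type.\<close>

definition simple_graph :: "'a set \<Rightarrow> 'a set set \<Rightarrow> bool" where
  "simple_graph V E \<longleftrightarrow> finite V \<and> (\<forall>e\<in>E. e \<subseteq> V \<and> card e = 2)"

definition elems :: "'a set \<Rightarrow> 'a set set \<Rightarrow> ('a + 'a set) set" where
  "elems V E = Inl ` V \<union> Inr ` E"

definition glen :: "'a set \<Rightarrow> 'a set set \<Rightarrow> nat" where
  "glen V E = card V + card E"

definition pos :: "'a set \<Rightarrow> 'a set set \<Rightarrow> (nat \<Rightarrow> 'a + 'a set) \<Rightarrow> ('a + 'a set) \<Rightarrow> nat" where
  "pos V E x a = inv_into {1..glen V E} x a"

definition cseq :: "'a set \<Rightarrow> 'a set set \<Rightarrow> (nat \<Rightarrow> 'a + 'a set) \<Rightarrow> bool" where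
  "cseq V E x \<longleftrightarrow> bij_betw x {1..glen V E} (elems V E) \<and>
     (\<forall>e\<in>E. \<forall>u\<in>e. pos V E x (Inr e) > pos V E x (Inl u))"

definition cost :: "'a set \<Rightarrow> 'a set set \<Rightarrow> (nat \<Rightarrow> 'a + 'a set) \<Rightarrow> int" where
  "cost V E x = (\<Sum>e\<in>E. 2 * int (pos V E x (Inr e)) - (\<Sum>u\<in>e. int (pos V E x (Inl u))))"

definition nu_star :: "'a set \<Rightarrow> 'a set set \<Rightarrow> int" where
  "nu_star V E = Max {cost V E x | x. cseq V E x}"

definition path_V :: "nat \<Rightarrow> nat set" where
  "path_V n = {1..n}"

definition path_E :: "nat \<Rightarrow> nat set set" where
  "path_E n = {{j, j + 1} | j. 1 \<le> j \<and> j \<le> n - 1}"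

end

theory Submission
  imports Defs
begin

lemma sum_distinct_lb:
  fixes X :: "nat set"
  assumes "finite X" "0 \<notin> X"
  shows "card X * (card X + 1) \<le> 2 * sum id X"
  using assms
proof (induction "card X" arbitrary: X)
  case 0
  then show ?case by simp
next
  case (Suc k)
  then have ne: "X \<noteq> {}" by auto
  define m where "m = Max X"
  have mX: "m \<in> X" using Suc ne m_def by simp
  have "X \<subseteq> {1..m}"
  proof
    fix y assume y: "y \<in> X"
    then have "y \<le> m" unfolding m_def using Suc.prems(1) by simp
    moreover have "y \<noteq> 0" using Suc.prems(2) y by (metis)
    ultimately show "y \<in> {1..m}" by simp
  qed
  then have "card X \<le> card {1..m}" by (rule card_mono[rotated]) simp
  then have cm: "card X \<le> m" by simp
  have ck: "k = card (X - {m})" using Suc mX by simp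
  have IH: "k * (k+1) \<le> 2 * sum id (X - {m})"
    using Suc(1)[OF ck] Suc(3,4) ck by auto
  have se: "sum id X = m + sum id (X - {m})" using Suc(3) mX by (simp add: sum.remove)
  have cX: "card X = k + 1" using Suc(2) by simp
  have ex: "(k+1)*(k+1+1) = k*(k+1) + 2*(k+1)" by (simp add: algebra_simps)
  have e2: "2 * sum id X = 2 * sum id (X - {m}) + 2 * m" using se by simp
  show ?case unfolding cX ex e2 by (rule add_mono[OF IH]) (use cm cX in simp)
qed

lemma gauss_int: "2 * (\<Sum>k\<in>{1..N}. int k) = int N * (int N + 1)"
  by (induction N) (auto simp: algebra_simps)

lemma inj_edge: "inj_on (\<lambda>j::nat. {j, j+1}) A"
  unfolding inj_on_def by (auto simp: doubleton_eq_iff)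

lemma pathE_img: "path_E n = (\<lambda>j. {j, j+1}) ` {1..n-1}"
  by (auto simp: path_E_def)

lemma card_pathE: "card (path_E n) = n - 1"
  unfolding pathE_img using card_image[OF inj_edge, of "{1..n-1}"] by simp

lemma glen_path: "glen (path_V n) (path_E n) = n + (n - 1)"
  by (simp add: glen_def path_V_def card_pathE)

lemma cost_formula:
  assumes n: "n \<ge> 2"
    and bij: "bij_betw x {1..glen (path_V n) (path_E n)} (elems (path_V n) (path_E n))"
  defines "p \<equiv> \<lambda>a. int (pos (path_V n) (path_E n) x a)"
  shows "cost (path_V n) (path_E n) x =
     2 * (\<Sum>k\<in>{1..glen (path_V n) (path_E n)}. int k)
     - 4 * (\<Sum>v\<in>{2..n-1}. p (Inl v)) - 3 * (p (Inl 1) + p (Inl n))"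
proof -
  define V where "V = path_V n"
  define E where "E = path_E n"
  have pb: "bij_betw (pos V E x) (elems V E) {1..glen V E}"
    unfolding pos_def using bij_betw_inv_into bij V_def E_def by blast
  have fV: "finite V" by (simp add: V_def path_V_def)
  have fE: "finite E" by (simp add: E_def pathE_img)
  have "(\<Sum>a\<in>elems V E. int (pos V E x a)) = (\<Sum>k\<in>{1..glen V E}. int k)"
    using sum.reindex_bij_betw[OF pb, of int] by simp
  moreover have "(\<Sum>a\<in>elems V E. int (pos V E x a)) =
      (\<Sum>v\<in>V. p (Inl v)) + (\<Sum>e\<in>E. p (Inr e))"
    unfolding elems_def using fV fE
    by (subst sum.union_disjoint) (auto simp: sum.reindex p_def V_def E_def)
  ultimately have tot: "(\<Sum>v\<in>V. p (Inl v)) + (\<Sum>e\<in>E. p (Inr e)) = (\<Sum>k\<in>{1..glen V E}. int k)"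
    by simp
  obtain m where m: "n = m + 2" using n by (metis add.commute le_Suc_ex)
  have cst: "cost V E x = 2 * (\<Sum>e\<in>E. p (Inr e)) - (\<Sum>e\<in>E. \<Sum>u\<in>e. p (Inl u))"
    unfolding cost_def p_def V_def E_def by (simp add: sum_subtractf sum_distrib_left)
  have "(\<Sum>e\<in>E. \<Sum>u\<in>e. p (Inl u)) = (\<Sum>j\<in>{1..m+1}. \<Sum>u\<in>{j,j+1}. p (Inl u))"
    unfolding E_def pathE_img m by (subst sum.reindex[OF inj_edge]) simp
  also have "\<dots> = (\<Sum>j\<in>{1..m+1}. p (Inl j) + p (Inl (j+1)))"
    by (rule sum.cong) auto
  also have "\<dots> = (\<Sum>j\<in>{1..m+1}. p (Inl j)) + (\<Sum>j\<in>{1..m+1}. p (Inl (j+1)))"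
    by (simp add: sum.distrib)
  also have "(\<Sum>j\<in>{1..m+1}. p (Inl (j+1))) = (\<Sum>j\<in>{2..m+2}. p (Inl j))"
    using sum.shift_bounds_cl_nat_ivl[of "\<lambda>j. p (Inl j)" 1 1 "m+1"] by (simp add: numeral_2_eq_2)
  finally have s1: "(\<Sum>e\<in>E. \<Sum>u\<in>e. p (Inl u)) = (\<Sum>j\<in>{1..m+1}. p (Inl j)) + (\<Sum>j\<in>{2..m+2}. p (Inl j))" .
  have a1: "(\<Sum>j\<in>{1..m+2}. p (Inl j)) = (\<Sum>j\<in>{1..m+1}. p (Inl j)) + p (Inl (m+2))"
    by (simp add: numeral_2_eq_2)
  have a2: "(\<Sum>j\<in>{1..m+2}. p (Inl j)) = p (Inl 1) + (\<Sum>j\<in>{2..m+2}. p (Inl j))"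
    by (subst sum.atLeast_Suc_atMost) (auto simp: numeral_2_eq_2)
  have a3: "(\<Sum>j\<in>{1..m+1}. p (Inl j)) = p (Inl 1) + (\<Sum>j\<in>{2..m+1}. p (Inl j))"
    by (subst sum.atLeast_Suc_atMost) (auto simp: numeral_2_eq_2)
  have VV: "V = {1..m+2}" by (simp add: V_def path_V_def m)
  have sV: "(\<Sum>v\<in>V. p (Inl v)) = (\<Sum>v\<in>{1..m+2}. p (Inl v))" by (simp only: VV)
  have fin: "cost V E x = 2 * (\<Sum>k\<in>{1..glen V E}. int k) - 4 * (\<Sum>v\<in>{2..m+1}. p (Inl v)) - 3 * (p (Inl 1) + p (Inl (m+2)))"
    using tot cst s1 a1 a2 a3 sV by (smt (verit))
  have h: "m + 2 - 1 = m + 1" by simp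
  show ?thesis using fin by (simp only: m h V_def E_def)
qed

lemma pos_bij:
  assumes "bij_betw x {1..glen V E} (elems V E)"
  shows "bij_betw (pos V E x) (elems V E) {1..glen V E}"
  unfolding pos_def using bij_betw_inv_into assms by blast

lemma lb_sum:
  assumes bij: "bij_betw x {1..glen V E} (elems V E)" and W: "W \<subseteq> V" "finite W"
  shows "int (card W) * (int (card W) + 1) \<le> 2 * (\<Sum>v\<in>W. int (pos V E x (Inl v)))"
proof -
  have pb: "bij_betw (pos V E x) (elems V E) {1..glen V E}" using pos_bij[OF bij] .
  have sub: "Inl ` W \<subseteq> elems V E" using W by (auto simp: elems_def)
  have inj: "inj_on (\<lambda>v. pos V E x (Inl v)) W"
    using pb sub unfolding bij_betw_def inj_on_def by blast
  define X where "X = (\<lambda>v. pos V E x (Inl v)) ` W"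
  have cX: "card X = card W" unfolding X_def using card_image[OF inj] .
  have fX: "finite X" unfolding X_def using W by simp
  have 0: "0 \<notin> X" unfolding X_def using pb sub unfolding bij_betw_def by fastforce
  have sX: "sum id X = (\<Sum>v\<in>W. pos V E x (Inl v))" unfolding X_def using sum.reindex[OF inj, of id] by simp
  have "card W * (card W + 1) \<le> 2 * (\<Sum>v\<in>W. pos V E x (Inl v))"
    using sum_distinct_lb[OF fX 0] cX sX by simp
  then have "int (card W * (card W + 1)) \<le> int (2 * (\<Sum>v\<in>W. pos V E x (Inl v)))"
    using of_nat_mono by blast
  then show ?thesis by (simp add: of_nat_sum algebra_simps)
qed

lemma upper:
  assumes n: "n \<ge> 2" and c: "cseq (path_V n) (path_E n) x"
  shows "cost (path_V n) (path_E n) x \<le> 2 * int n ^ 2 - 2 * int n - 1"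
proof -
  have bij: "bij_betw x {1..glen (path_V n) (path_E n)} (elems (path_V n) (path_E n))"
    using c cseq_def by blast
  define p where "p = (\<lambda>a. int (pos (path_V n) (path_E n) x a))"
  obtain m where m: "n = m + 2" using n by (metis add.commute le_Suc_ex)
  define A where "A = (\<Sum>v\<in>{2..n-1}. p (Inl v))"
  define B where "B = p (Inl 1) + p (Inl n)"
  define T where "T = (\<Sum>k\<in>{1..glen (path_V n) (path_E n)}. int k)"
  have cf: "cost (path_V n) (path_E n) x = 2 * T - 4 * A - 3 * B"
    using cost_formula[OF n bij] unfolding A_def B_def T_def p_def by simp
  have gl: "glen (path_V n) (path_E n) = 2 * m + 3" using glen_path m by simp
  have T2: "2 * T = (2 * int m + 3) * (2 * int m + 4)"
    unfolding T_def gl using gauss_int[of "2*m+3"] by simp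
  have W1: "{1..n} = insert 1 (insert n {2..n-1})" using m by auto
  have sW1: "(\<Sum>v\<in>{1..n}. p (Inl v)) = A + B"
    unfolding W1 A_def B_def using m by simp
  have l1: "int (card {1..n}) * (int (card {1..n}) + 1) \<le> 2 * (\<Sum>v\<in>{1..n}. p (Inl v))"
    unfolding p_def by (rule lb_sum[OF bij]) (auto simp: path_V_def)
  have l2: "int (card {2..n-1}) * (int (card {2..n-1}) + 1) \<le> 2 * A"
    unfolding p_def A_def by (rule lb_sum[OF bij]) (auto simp: path_V_def)
  have c1: "card {1..n} = m + 2" using m by simp
  have c2: "card {2..n-1} = m" using m by simp
  have L1: "(int m + 2) * (int m + 3) \<le> 2 * (A + B)" using l1 sW1 c1 by (simp add: add.commute)
  have L2: "int m * (int m + 1) \<le> 2 * A" using l2 c2 by simp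
  have "2 * int n ^ 2 - 2 * int n - 1 = 2 * (int m + 2)^2 - 2 * (int m + 2) - 1" using m by simp
  then show ?thesis using cf T2 L1 L2
    by (simp add: algebra_simps power2_eq_square)
qed

lemma witness:
  assumes n: "n \<ge> 2"
  shows "\<exists>x. cseq (path_V n) (path_E n) x \<and> cost (path_V n) (path_E n) x = 2 * int n ^ 2 - 2 * int n - 1"
proof -
  obtain m where m: "n = m + 2" using n by (metis add.commute le_Suc_ex)
  define V where "V = path_V n"
  define E where "E = path_E n"
  have gl: "glen V E = 2 * m + 3" using glen_path m V_def E_def by simp
  have EV: "V = {1..m+2}" unfolding V_def path_V_def m by simp
  have EE: "E = (\<lambda>j. {j, j+1}) ` {1..m+1}" unfolding E_def pathE_img m by simp
  have el: "elems V E = Inl ` {1..m+2} \<union> Inr ` ((\<lambda>j. {j, j+1}) ` {1..m+1})"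
    unfolding elems_def EV EE by simp
  define xw :: "nat \<Rightarrow> nat + nat set" where "xw = (\<lambda>k. if k \<le> m then Inl (k+1) else if k = m+1 then Inl 1
     else if k = m+2 then Inl (m+2) else Inr {k-(m+2), k-(m+2)+1})"
  define q :: "nat + nat set \<Rightarrow> nat" where "q = case_sum (\<lambda>v. if v = 1 then m+1 else if v = m+2 then m+2 else v-1)
     (\<lambda>e. m+2 + Min e)"
  have x_in: "xw k \<in> elems V E" if k: "k \<in> {1..glen V E}" for k
  proof (cases "k \<le> m+2")
    case True then show ?thesis using k unfolding el xw_def by auto
  next
    case False
    then have "k - (m+2) \<in> {1..m+1}" using k gl by auto
    then show ?thesis using False unfolding el xw_def by auto
  qed
  have q_in: "q a \<in> {1..glen V E}" if "a \<in> elems V E" for a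
    using that unfolding el gl q_def by auto
  have qx: "q (xw k) = k" if "k \<in> {1..glen V E}" for k
    using that unfolding xw_def q_def gl by auto
  have xq: "xw (q a) = a" if "a \<in> elems V E" for a
    using that unfolding xw_def q_def el by (auto split: if_splits)
  have b: "bij_betw xw {1..glen V E} (elems V E)"
    by (rule bij_betw_byWitness[where f' = q]) (use x_in q_in qx xq in auto)
  have inj: "inj_on xw {1..glen V E}" using b bij_betw_def by blast
  have pq: "pos V E xw a = q a" if a: "a \<in> elems V E" for a
  proof -
    have "pos V E xw (xw (q a)) = q a" unfolding pos_def using inv_into_f_f[OF inj q_in[OF a]] .
    then show ?thesis using xq[OF a] by simp
  qed
  have cs: "cseq V E xw"
    unfolding cseq_def
  proof (intro conjI b ballI)
    fix e u assume e: "e \<in> E" and u: "u \<in> e"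
    have ee: "Inr e \<in> elems V E" using e by (simp add: elems_def)
    have uV: "u \<in> V" using e u unfolding EE EV by auto
    have uu: "Inl u \<in> elems V E" using uV by (simp add: elems_def)
    show "pos V E xw (Inl u) < pos V E xw (Inr e)"
      unfolding pq[OF ee] pq[OF uu] using e uV unfolding EE EV q_def by auto
  qed
  have cf: "cost V E xw = 2 * (\<Sum>k\<in>{1..glen V E}. int k)
     - 4 * (\<Sum>v\<in>{2..n-1}. int (pos V E xw (Inl v))) - 3 * (int (pos V E xw (Inl 1)) + int (pos V E xw (Inl n)))"
    using cost_formula[OF n] b unfolding V_def E_def by simp
  have p1: "pos V E xw (Inl 1) = m + 1" using pq[of "Inl 1"] unfolding el q_def by simp
  have pn: "pos V E xw (Inl n) = m + 2" using pq[of "Inl n"] unfolding el q_def m by simp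
  have "(\<Sum>v\<in>{2..n-1}. int (pos V E xw (Inl v))) = (\<Sum>v\<in>{1+1..m+1}. int (v - 1))"
    unfolding m by (rule sum.cong) (auto simp: pq el q_def)
  also have "\<dots> = (\<Sum>v\<in>{1..m}. int v)"
    using sum.shift_bounds_cl_nat_ivl[of "\<lambda>v. int (v - 1)" 1 1 m] by simp
  finally have sA: "2 * (\<Sum>v\<in>{2..n-1}. int (pos V E xw (Inl v))) = int m * (int m + 1)"
    using gauss_int[of m] by simp
  have T2: "2 * (\<Sum>k\<in>{1..glen V E}. int k) = (2 * int m + 3) * (2 * int m + 4)"
    unfolding gl using gauss_int[of "2*m+3"] by simp
  have "cost V E xw = 2 * int n ^ 2 - 2 * int n - 1"
    using cf p1 pn sA T2 unfolding m by (simp add: algebra_simps power2_eq_square)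
  then show ?thesis using cs unfolding V_def E_def by blast
qed

theorem theorem3:
  fixes n :: nat
  assumes "n \<ge> 2"
  shows "nu_star (path_V n) (path_E n) = 2 * int n ^ 2 - 2 * int n - 1"
proof -
  define S where "S = {cost (path_V n) (path_E n) x | x. cseq (path_V n) (path_E n) x}"
  have ub: "y \<le> 2 * int n ^ 2 - 2 * int n - 1" if "y \<in> S" for y
    using that upper[OF assms] unfolding S_def by blast
  have lb: "0 \<le> y" if yS: "y \<in> S" for y
  proof -
    obtain x where c: "cseq (path_V n) (path_E n) x" and y: "y = cost (path_V n) (path_E n) x"
      using yS unfolding S_def by blast
    show ?thesis unfolding y cost_def
    proof (rule sum_nonneg)
      fix e assume e: "e \<in> path_E n"
      then obtain j where ej: "e = {j, j+1}" unfolding path_E_def by blast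
      have gt: "pos (path_V n) (path_E n) x (Inr e) > pos (path_V n) (path_E n) x (Inl u)" if "u \<in> e" for u
        using c e that unfolding cseq_def by blast
      have a1: "pos (path_V n) (path_E n) x (Inr e) > pos (path_V n) (path_E n) x (Inl j)"
        using gt ej by simp
      have a2: "pos (path_V n) (path_E n) x (Inr e) > pos (path_V n) (path_E n) x (Inl (j+1))"
        using gt ej by simp
      have s2: "(\<Sum>u\<in>e. int (pos (path_V n) (path_E n) x (Inl u))) =
         int (pos (path_V n) (path_E n) x (Inl j)) + int (pos (path_V n) (path_E n) x (Inl (j+1)))"
        unfolding ej by simp
      show "0 \<le> 2 * int (pos (path_V n) (path_E n) x (Inr e)) - (\<Sum>u\<in>e. int (pos (path_V n) (path_E n) x (Inl u)))"
        unfolding s2 using a1 a2 by linarith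
    qed
  qed
  have fin: "finite S"
    by (rule finite_subset[of _ "{0..2 * int n ^ 2 - 2 * int n - 1}"]) (use ub lb in auto)
  obtain x0 where x0: "cseq (path_V n) (path_E n) x0" "cost (path_V n) (path_E n) x0 = 2 * int n ^ 2 - 2 * int n - 1"
    using witness[OF assms] by blast
  have mem: "2 * int n ^ 2 - 2 * int n - 1 \<in> S" unfolding S_def using x0 by (metis (mono_tags, lifting) mem_Collect_eq)
  show ?thesis unfolding nu_star_def S_def[symmetric]
    by (rule Max_eqI[OF fin ub mem])
qed

end
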